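(* There is an absolute constant $C>0$ such that for all $n,m\ge3$ and $p\in(0,1)$, $$n^2\|\bar g_2\ast_2^0\bar g_2\|_2^2\le C\big(\operatorname{Var}[N_E]\big)^2\frac{1}{n^2\hat p(1-\hat p)},\qquad n^3\|\bar g_2\ast_2^1\bar g_2\|_2^2\le C\big(\operatorname{Var}[N_E]\big)^2\Big(\frac{1}{n^2\hat p(1-\hat p)}+\frac1n\Big),$$ where $N_E$ is the number of edges of $\mathcal G(n,m,p)$.
   Context: Random intersection graph $\mathcal G(n,m,p)$: vertices $v_1,\ldots,v_n$, attributes $a_1,\ldots,a_m$; each vertex chooses each attribute independently with probability $p$; two vertices are adjacent iff they chose a common attribute; $\hat p=1-(1-p^2)^m$. $\mu_{m,p}(x)=p^{|x|}(1-p)^{m-|x|}$ on $\{0,1\}^m$; $g(x,y)=1$ if $x_i=y_i=1$ for some $i$, else $0$; $\bar g_2=g-\hat p$. Norms are $L^2$ with respect to products of $\mu_{m,p}$. Contraction: for $f,h$ on $(\{0,1\}^m)^2$ and $0\le a\le 2$, $f\ast_2^ah(x_1,\ldots,x_{2-a})=\int_{(\{0,1\}^m)^a}f(w,x)h(w,x)\,d\mu_{m,p}^{\otimes a}(w)$ (so $\|\bar g_2\ast_2^0\bar g_2\|_2^2=\int\bar g_2^4$ and $\|\bar g_2\ast_2^1\bar g_2\|_2^2=\int(\int\bar g_2(x,y)^2d\mu_{m,p}(x))^2d\mu_{m,p}(y)$). *)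

theory Defs
  imports "HOL-Library.FuncSet" Complex_Main
begin

text \<open>Points of {0,1}^m are encoded as subsets of the attribute set {..<m}
  (the set of indices i with x_i = 1).\<close>

definition cube :: "nat \<Rightarrow> nat set set" where
  "cube m = Pow {..<m}"

definition mu :: "nat \<Rightarrow> real \<Rightarrow> nat set \<Rightarrow> real" where
  "mu m p x = p ^ card x * (1 - p) ^ (m - card x)"

definition g :: "nat set \<Rightarrow> nat set \<Rightarrow> real" where
  "g x y = (if x \<inter> y \<noteq> {} then 1 else 0)"

definition phat :: "nat \<Rightarrow> real \<Rightarrow> real" where
  "phat m p = 1 - (1 - p^2) ^ m"

definition gbar2 :: "nat \<Rightarrow> real \<Rightarrow> nat set \<Rightarrow> nat set \<Rightarrow> real" where
  "gbar2 m p x y = g x y - phat m p"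

definition contr0 :: "(nat set \<Rightarrow> nat set \<Rightarrow> real) \<Rightarrow> (nat set \<Rightarrow> nat set \<Rightarrow> real)
    \<Rightarrow> nat set \<Rightarrow> nat set \<Rightarrow> real" where
  "contr0 f h x1 x2 = f x1 x2 * h x1 x2"

definition contr1 :: "nat \<Rightarrow> real \<Rightarrow> (nat set \<Rightarrow> nat set \<Rightarrow> real) \<Rightarrow> (nat set \<Rightarrow> nat set \<Rightarrow> real)
    \<Rightarrow> nat set \<Rightarrow> real" where
  "contr1 m p f h x = (\<Sum>w\<in>cube m. mu m p w * (f w x * h w x))"

definition L2sq1 :: "nat \<Rightarrow> real \<Rightarrow> (nat set \<Rightarrow> real) \<Rightarrow> real" where
  "L2sq1 m p F = (\<Sum>x\<in>cube m. mu m p x * (F x)^2)"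

definition L2sq2 :: "nat \<Rightarrow> real \<Rightarrow> (nat set \<Rightarrow> nat set \<Rightarrow> real) \<Rightarrow> real" where
  "L2sq2 m p F = (\<Sum>x\<in>cube m. \<Sum>y\<in>cube m. mu m p x * mu m p y * (F x y)^2)"

text \<open>The random intersection graph G(n,m,p): a configuration assigns to each
  vertex i < n its attribute set X i; configurations are weighted by the product
  of mu.\<close>
definition configs :: "nat \<Rightarrow> nat \<Rightarrow> (nat \<Rightarrow> nat set) set" where
  "configs n m = PiE {..<n} (\<lambda>_. cube m)"

definition weight :: "nat \<Rightarrow> nat \<Rightarrow> real \<Rightarrow> (nat \<Rightarrow> nat set) \<Rightarrow> real" where
  "weight n m p X = (\<Prod>i<n. mu m p (X i))"

definition num_edges :: "nat \<Rightarrow> (nat \<Rightarrow> nat set) \<Rightarrow> real" where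
  "num_edges n X = real (card {(i, j). i < j \<and> j < n \<and> X i \<inter> X j \<noteq> {}})"

definition expect :: "nat \<Rightarrow> nat \<Rightarrow> real \<Rightarrow> ((nat \<Rightarrow> nat set) \<Rightarrow> real) \<Rightarrow> real" where
  "expect n m p F = (\<Sum>X\<in>configs n m. weight n m p X * F X)"

definition var_edges :: "nat \<Rightarrow> nat \<Rightarrow> real \<Rightarrow> real" where
  "var_edges n m p =
     expect n m p (\<lambda>X. (num_edges n X - expect n m p (num_edges n))^2)"

end

theory Submission
  imports Defs
begin


lemma binom_pow:
  fixes a b :: real
  assumes "finite A"
  shows "(\<Sum>y\<in>Pow A. a ^ card y * b ^ (card A - card y)) = (a + b) ^ card A"
proof -
  have "(a + b) ^ card A = (\<Prod>x\<in>A. a + b)" by simp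
  also have "\<dots> = (\<Sum>X\<in>Pow A. (\<Prod>x\<in>X. a) * (\<Prod>x\<in>A-X. b))"
    by (rule prod_add[OF assms])
  also have "\<dots> = (\<Sum>y\<in>Pow A. a ^ card y * b ^ (card A - card y))"
  proof (rule sum.cong)
    fix X assume "X \<in> Pow A"
    then have "card (A - X) = card A - card X" using assms
      by (meson PowD card_Diff_subset finite_subset)
    then show "(\<Prod>x\<in>X. a) * (\<Prod>x\<in>A-X. b) = a ^ card X * b ^ (card A - card X)" by simp
  qed simp
  finally show ?thesis by simp
qed

lemma finite_cube[simp]: "finite (cube m)" by (simp add: cube_def)

lemma cube_card: "x \<in> cube m \<Longrightarrow> card x \<le> m"
  unfolding cube_def by (metis PowD card_lessThan card_mono finite_lessThan)

lemma mu_nonneg: "0 \<le> p \<Longrightarrow> p \<le> 1 \<Longrightarrow> 0 \<le> mu m p x"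
  unfolding mu_def by simp

lemma sum_mu: "(\<Sum>x\<in>cube m. mu m p x) = 1"
  using binom_pow[of "{..<m}" p "1-p"] by (simp add: cube_def mu_def)

lemma inner_disj:
  assumes x: "x \<in> cube m"
  shows "(\<Sum>y\<in>cube m. mu m p y * (if x \<inter> y = {} then 1 else 0)) = (1 - p) ^ card x"
proof -
  let ?A = "{..<m} - x"
  have fx: "finite x" using x unfolding cube_def by (meson PowD finite_lessThan finite_subset)
  have cA: "card ?A = m - card x" using x unfolding cube_def
    by (simp add: card_Diff_subset fx)
  have "(\<Sum>y\<in>cube m. mu m p y * (if x \<inter> y = {} then 1 else 0)) = (\<Sum>y\<in>Pow ?A. mu m p y)"
    by (rule sum.mono_neutral_cong_right) (auto simp: cube_def)
  also have "\<dots> = (\<Sum>y\<in>Pow ?A. (1-p) ^ card x * (p ^ card y * (1-p) ^ (card ?A - card y)))"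
  proof (rule sum.cong)
    fix y assume y: "y \<in> Pow ?A"
    have "card y \<le> card ?A" using y by (simp add: card_mono)
    then have "m - card y = card x + (card ?A - card y)" using cA x cube_card by fastforce
    then show "mu m p y = (1-p) ^ card x * (p ^ card y * (1-p) ^ (card ?A - card y))"
      unfolding mu_def by (simp add: power_add)
  qed simp
  also have "\<dots> = (1-p) ^ card x" using binom_pow[of ?A p "1-p"]
    by (simp add: sum_distrib_left[symmetric])
  finally show ?thesis .
qed

lemma sum_disj: "(\<Sum>x\<in>cube m. \<Sum>y\<in>cube m. mu m p x * mu m p y * (if x \<inter> y = {} then 1 else 0))
   = (1 - p^2) ^ m"
proof -
  have "(\<Sum>x\<in>cube m. \<Sum>y\<in>cube m. mu m p x * mu m p y * (if x \<inter> y = {} then 1 else 0))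
     = (\<Sum>x\<in>cube m. mu m p x * (1-p) ^ card x)"
    by (rule sum.cong) (auto simp: inner_disj mult.assoc sum_distrib_left[symmetric])
  also have "\<dots> = (\<Sum>x\<in>Pow {..<m}. (p*(1-p)) ^ card x * (1-p) ^ (card {..<m} - card x))"
    by (simp add: cube_def mu_def power_mult_distrib mult_ac)
  also have "\<dots> = (1 - p^2) ^ m" using binom_pow[of "{..<m}" "p*(1-p)" "1-p"]
    by (simp add: algebra_simps power2_eq_square)
  finally show ?thesis .
qed

lemma sum_g: "(\<Sum>x\<in>cube m. \<Sum>y\<in>cube m. mu m p x * mu m p y * g x y) = phat m p"
proof -
  have "(\<Sum>x\<in>cube m. \<Sum>y\<in>cube m. mu m p x * mu m p y * g x y) =
     (\<Sum>x\<in>cube m. \<Sum>y\<in>cube m. mu m p x * mu m p y - mu m p x * mu m p y * (if x \<inter> y = {} then 1 else 0))"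
    by (rule sum.cong, simp, rule sum.cong) (auto simp: g_def)
  also have "\<dots> = 1 - (1-p^2)^m"
    by (simp add: sum_subtractf sum_disj[symmetric] sum_distrib_left[symmetric] sum_distrib_right[symmetric] sum_mu)
  finally show ?thesis by (simp add: phat_def)
qed



definition s :: "nat \<Rightarrow> real \<Rightarrow> (nat set \<Rightarrow> real) \<Rightarrow> real" where
  "s m p f = (\<Sum>x\<in>cube m. mu m p x * f x)"
definition ss :: "nat \<Rightarrow> real \<Rightarrow> (nat set \<Rightarrow> nat set \<Rightarrow> real) \<Rightarrow> real" where
  "ss m p f = (\<Sum>x\<in>cube m. \<Sum>y\<in>cube m. mu m p x * mu m p y * f x y)"
definition q :: "nat \<Rightarrow> real \<Rightarrow> nat set \<Rightarrow> real" where
  "q m p x = s m p (\<lambda>w. g x w)"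
definition h1 where "h1 m p x = q m p x - phat m p"
definition h2 where "h2 m p x y = g x y - q m p x - q m p y + phat m p"
definition V1 where "V1 m p = s m p (\<lambda>x. (h1 m p x)^2)"
definition V2 where "V2 m p = ss m p (\<lambda>x y. (h2 m p x y)^2)"

lemma g_sym: "g x y = g y x" by (auto simp: g_def)
lemma g_sq: "(g x y)^2 = g x y" by (auto simp: g_def)
lemma h2_sym: "h2 m p x y = h2 m p y x" by (simp add: h2_def g_sym)

lemma s_add: "s m p (\<lambda>x. f x + h x) = s m p f + s m p h"
  by (simp add: s_def distrib_left sum.distrib)
lemma s_diff: "s m p (\<lambda>x. f x - h x) = s m p f - s m p h"
  by (simp add: s_def right_diff_distrib sum_subtractf)
lemma s_cmult: "s m p (\<lambda>x. c * f x) = c * s m p f"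
  by (simp add: s_def sum_distrib_left mult_ac)
lemma s_const: "s m p (\<lambda>x. c) = c"
  by (simp add: s_def sum_distrib_right[symmetric] sum_mu)

lemma ss_diff: "ss m p (\<lambda>x y. f x y - h x y) = ss m p f - ss m p h"
  by (simp add: ss_def right_diff_distrib sum_subtractf)
lemma ss_iter: "ss m p f = s m p (\<lambda>x. s m p (\<lambda>y. f x y))"
  by (simp add: ss_def s_def sum_distrib_left mult_ac)
lemma ss_swap: "ss m p f = ss m p (\<lambda>x y. f y x)"
  unfolding ss_def by (subst sum.swap) (simp add: mult_ac)

lemma q_eq: "q m p = (\<lambda>x. s m p (g x))" by (rule ext) (simp add: q_def)
lemma s_q: "s m p (q m p) = phat m p"
  using sum_g[of m p] by (simp add: ss_def[symmetric] ss_iter q_eq)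

lemma s_h1: "s m p (h1 m p) = 0"
proof -
  have "h1 m p = (\<lambda>x. q m p x - phat m p)" by (rule ext) (simp add: h1_def)
  then show ?thesis by (simp add: s_diff s_q s_const)
qed

lemma s_h2: "s m p (\<lambda>y. h2 m p x y) = 0"
proof -
  have "s m p (\<lambda>y. h2 m p x y) = s m p (\<lambda>y. g x y) - s m p (\<lambda>y. q m p x) - s m p (q m p) + s m p (\<lambda>y. phat m p)"
    unfolding h2_def by (simp add: s_add s_diff)
  then show ?thesis by (simp add: s_const s_q q_def)
qed

lemma s_h2': "s m p (\<lambda>x. h2 m p x y) = 0"
  using s_h2[of m p y] by (simp add: h2_sym)

lemma s_g': "s m p (\<lambda>w. g w x) = q m p x"
  by (simp add: q_def g_sym)

abbreviation Dv where "Dv m p \<equiv> phat m p * (1 - phat m p)"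

lemma gbar_sq_pt: "(g x y - P)^2 = (1 - 2 * P) * g x y + P^2"
  by (auto simp: g_def power2_eq_square algebra_simps)

lemma ss_gbar_sq: "ss m p (\<lambda>x y. (g x y - phat m p)^2) = Dv m p"
proof -
  let ?P = "phat m p"
  have "ss m p (\<lambda>x y. (g x y - ?P)^2) = s m p (\<lambda>x. s m p (\<lambda>y. (1 - 2 * ?P) * g x y + ?P^2))"
    unfolding ss_iter gbar_sq_pt ..
  also have "\<dots> = s m p (\<lambda>x. (1 - 2 * ?P) * q m p x + ?P^2)"
    by (simp only: s_add s_cmult s_const q_def)
  also have "\<dots> = (1 - 2 * ?P) * ?P + ?P^2"
    by (simp only: s_add s_cmult s_const s_q)
  also have "\<dots> = Dv m p" by (simp add: power2_eq_square algebra_simps)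
  finally show ?thesis .
qed

lemma V2_eq: "V2 m p = Dv m p - 2 * V1 m p"
proof -
  let ?P = "phat m p"
  have e: "(h2 m p x y)^2 = h2 m p x y * (g x y - ?P) - h1 m p x * h2 m p x y - h1 m p y * h2 m p x y" for x y
    by (simp add: h2_def h1_def power2_eq_square algebra_simps)
  have a: "ss m p (\<lambda>x y. h1 m p x * h2 m p x y) = 0"
    by (simp add: ss_iter s_cmult s_h2 s_const)
  have b: "ss m p (\<lambda>x y. h1 m p y * h2 m p x y) = 0"
    by (subst ss_swap) (simp add: ss_iter s_cmult s_h2' s_const)
  have c: "ss m p (\<lambda>x y. h1 m p x * (g x y - ?P)) = V1 m p"
    proof -
    have "ss m p (\<lambda>x y. h1 m p x * (g x y - ?P)) = s m p (\<lambda>x. h1 m p x * s m p (\<lambda>y. g x y - ?P))"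
      by (simp only: ss_iter s_cmult)
    also have "\<dots> = s m p (\<lambda>x. h1 m p x * h1 m p x)"
      by (simp only: s_diff s_const q_def[symmetric] h1_def[symmetric])
    finally show ?thesis by (simp add: V1_def power2_eq_square)
  qed
  have c': "ss m p (\<lambda>x y. h1 m p y * (g x y - ?P)) = V1 m p"
    by (subst ss_swap) (simp add: g_sym c)
  have hh: "h2 m p x y * (g x y - ?P) = (g x y - ?P)^2 - h1 m p x * (g x y - ?P) - h1 m p y * (g x y - ?P)" for x y
    by (simp add: h2_def h1_def power2_eq_square algebra_simps)
  have "ss m p (\<lambda>x y. h2 m p x y * (g x y - ?P)) = ss m p (\<lambda>x y. (g x y - ?P)^2) - ss m p (\<lambda>x y. h1 m p x * (g x y - ?P))
      - ss m p (\<lambda>x y. h1 m p y * (g x y - ?P))"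
    unfolding hh by (simp only: ss_diff)
  then have d: "ss m p (\<lambda>x y. h2 m p x y * (g x y - ?P)) = Dv m p - 2 * V1 m p"
    using ss_gbar_sq c c' by simp
  have "V2 m p = ss m p (\<lambda>x y. h2 m p x y * (g x y - ?P)) - ss m p (\<lambda>x y. h1 m p x * h2 m p x y)
     - ss m p (\<lambda>x y. h1 m p y * h2 m p x y)"
    unfolding V2_def e by (simp only: ss_diff)
  then show ?thesis using a b d by simp
qed

lemma V1_nonneg: "0 < p \<Longrightarrow> p < 1 \<Longrightarrow> 0 \<le> V1 m p"
  unfolding V1_def s_def by (intro sum_nonneg mult_nonneg_nonneg mu_nonneg) auto
lemma V2_nonneg: "0 < p \<Longrightarrow> p < 1 \<Longrightarrow> 0 \<le> V2 m p"
  unfolding V2_def ss_def by (intro sum_nonneg mult_nonneg_nonneg mu_nonneg) auto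

lemma L2_1: "L2sq1 m p (contr1 m p (gbar2 m p) (gbar2 m p)) = (1 - 2*phat m p)^2 * V1 m p + (Dv m p)^2"
proof -
  let ?P = "phat m p"
  have "contr1 m p (gbar2 m p) (gbar2 m p) x = (1 - 2 * ?P) * h1 m p x + Dv m p" for x
  proof -
    have "contr1 m p (gbar2 m p) (gbar2 m p) x = s m p (\<lambda>w. (1 - 2 * ?P) * g w x + ?P^2)"
      unfolding contr1_def s_def gbar2_def
      by (rule sum.cong) (auto simp: g_def power2_eq_square algebra_simps)
    also have "\<dots> = (1 - 2 * ?P) * q m p x + ?P^2"
      by (simp only: s_add s_cmult s_const s_g')
    also have "\<dots> = (1 - 2 * ?P) * h1 m p x + Dv m p"
      by (simp add: h1_def power2_eq_square algebra_simps)
    finally show ?thesis .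
  qed
  then have "L2sq1 m p (contr1 m p (gbar2 m p) (gbar2 m p)) = s m p (\<lambda>x. ((1 - 2 * ?P) * h1 m p x + Dv m p)^2)"
    by (simp add: L2sq1_def s_def)
  also have "\<dots> = s m p (\<lambda>x. (1 - 2 * ?P)^2 * (h1 m p x)^2 + (2 * (1 - 2 * ?P) * Dv m p) * h1 m p x + (Dv m p)^2)"
    by (rule arg_cong[where f="s m p"], rule ext) (simp only: power2_sum power_mult_distrib mult_ac)
  also have "\<dots> = (1 - 2*?P)^2 * V1 m p + (Dv m p)^2"
    by (simp add: s_add s_cmult s_const s_h1 V1_def)
  finally show ?thesis .
qed

lemma phat_bounds: "0 < p \<Longrightarrow> p < 1 \<Longrightarrow> m \<ge> 1 \<Longrightarrow> 0 < phat m p \<and> phat m p < 1"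
proof -
  assume a: "0 < p" "p < 1" "m \<ge> 1"
  have "0 < p^2" "p^2 < 1" using a by (auto simp: power_less_one_iff)
  then have "0 < (1-p^2)^m" "(1-p^2)^m < 1" using a by (auto intro: power_less_one_iff[THEN iffD2])
  then show ?thesis by (simp add: phat_def)
qed

lemma L2_0: assumes "0 < p" "p < 1" "m \<ge> 1"
  shows "L2sq2 m p (contr0 (gbar2 m p) (gbar2 m p)) \<le> Dv m p"
proof -
  have P: "0 < phat m p" "phat m p < 1" using phat_bounds assms by auto
  have "L2sq2 m p (contr0 (gbar2 m p) (gbar2 m p)) \<le> ss m p (\<lambda>x y. (g x y - phat m p)^2)"
    unfolding L2sq2_def ss_def
  proof (intro sum_mono mult_left_mono)
    fix x y
    have "\<bar>g x y - phat m p\<bar> \<le> 1" using P by (auto simp: g_def)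
    then have "(g x y - phat m p)^2 \<le> 1" using abs_le_square_iff[of "g x y - phat m p" 1] by simp
    then have "(g x y - phat m p)^2 * (g x y - phat m p)^2 \<le> 1 * (g x y - phat m p)^2"
      by (rule mult_right_mono) simp
    then show "(contr0 (gbar2 m p) (gbar2 m p) x y)\<^sup>2 \<le> (g x y - phat m p)\<^sup>2"
      unfolding contr0_def gbar2_def by (simp add: power2_eq_square)
    show "0 \<le> mu m p x * mu m p y" using assms by (simp add: mu_nonneg)
  qed
  then show ?thesis by (simp add: ss_gbar_sq)
qed



lemma configs_insert:
  assumes "k < n"
  shows "configs n m = (\<lambda>(y, G). G(k := y)) ` (cube m \<times> PiE ({..<n} - {k}) (\<lambda>_. cube m))"
proof -
  have "{..<n} = insert k ({..<n} - {k})" using assms by auto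
  then show ?thesis unfolding configs_def by (metis PiE_insert_eq)
qed

lemma expect_decomp:
  assumes "k < n"
  shows "expect n m p F = (\<Sum>G\<in>PiE ({..<n} - {k}) (\<lambda>_. cube m).
     (\<Prod>i\<in>{..<n} - {k}. mu m p (G i)) * (\<Sum>y\<in>cube m. mu m p y * F (G(k := y))))"
proof -
  let ?K = "{..<n} - {k}"
  let ?Q = "PiE ?K (\<lambda>_. cube m)"
  have inj: "inj_on (\<lambda>(y, G). G(k := y)) (cube m \<times> ?Q)"
    by (rule inj_combinator) simp
  have w: "weight n m p (G(k := y)) = mu m p y * (\<Prod>i\<in>?K. mu m p (G i))" for G y
  proof -
    have "{..<n} = insert k ?K" using assms by auto
    then have "weight n m p (G(k := y)) = (\<Prod>i\<in>insert k ?K. mu m p ((G(k := y)) i))"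
      unfolding weight_def by simp
    also have "\<dots> = mu m p y * (\<Prod>i\<in>?K. mu m p ((G(k := y)) i))"
      by (subst prod.insert) auto
    also have "(\<Prod>i\<in>?K. mu m p ((G(k := y)) i)) = (\<Prod>i\<in>?K. mu m p (G i))"
      by (rule prod.cong) auto
    finally show ?thesis .
  qed
  have "expect n m p F = (\<Sum>z\<in>cube m \<times> ?Q. weight n m p ((\<lambda>(y, G). G(k := y)) z) * F ((\<lambda>(y, G). G(k := y)) z))"
    unfolding expect_def configs_insert[OF assms] by (subst sum.reindex[OF inj]) (simp add: comp_def)
  also have "\<dots> = (\<Sum>y\<in>cube m. \<Sum>G\<in>?Q. mu m p y * (\<Prod>i\<in>?K. mu m p (G i)) * F (G(k := y)))"
    by (subst sum.cartesian_product) (rule sum.cong, auto simp: w)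
  also have "\<dots> = (\<Sum>G\<in>?Q. \<Sum>y\<in>cube m. mu m p y * (\<Prod>i\<in>?K. mu m p (G i)) * F (G(k := y)))"
    by (rule sum.swap)
  also have "\<dots> = (\<Sum>G\<in>?Q. (\<Prod>i\<in>?K. mu m p (G i)) * (\<Sum>y\<in>cube m. mu m p y * F (G(k := y))))"
    by (simp add: sum_distrib_left mult_ac)
  finally show ?thesis .
qed

lemma E_avg:
  assumes "k < n"
  shows "expect n m p F = expect n m p (\<lambda>X. \<Sum>y\<in>cube m. mu m p y * F (X(k := y)))"
  unfolding expect_decomp[OF assms, of m p F] expect_decomp[OF assms, of m p "\<lambda>X. \<Sum>y\<in>cube m. mu m p y * F (X(k := y))"]
  by (simp add: sum_distrib_right[symmetric] sum_mu)

lemma E_zero: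
  assumes "k < n" "\<And>X. (\<Sum>y\<in>cube m. mu m p y * F (X(k := y))) = 0"
  shows "expect n m p F = 0"
  by (subst E_avg[OF assms(1)]) (simp add: assms(2) expect_def)

lemma E_const: "expect n m p (\<lambda>X. c) = c"
proof -
  have "(\<Sum>X\<in>configs n m. weight n m p X) = (\<Prod>i<n. \<Sum>y\<in>cube m. mu m p y)"
    unfolding configs_def weight_def by (subst prod_sum_PiE) auto
  then show ?thesis by (simp add: expect_def sum_distrib_right[symmetric] sum_mu)
qed

lemma E_add: "expect n m p (\<lambda>X. F X + G X) = expect n m p F + expect n m p G"
  by (simp add: expect_def distrib_left sum.distrib)
lemma E_diff: "expect n m p (\<lambda>X. F X - G X) = expect n m p F - expect n m p G"
  by (simp add: expect_def right_diff_distrib sum_subtractf)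
lemma E_cmult: "expect n m p (\<lambda>X. c * F X) = c * expect n m p F"
  by (simp add: expect_def sum_distrib_left mult_ac)
lemma E_sum: "expect n m p (\<lambda>X. \<Sum>i\<in>I. F i X) = (\<Sum>i\<in>I. expect n m p (F i))"
  unfolding expect_def sum_distrib_left by (rule sum.swap)

lemma E1:
  assumes "i < n"
  shows "expect n m p (\<lambda>X. f (X i)) = (\<Sum>y\<in>cube m. mu m p y * f y)"
  by (subst E_avg[OF assms]) (simp add: E_const)

lemma E2:
  assumes "i < n" "j < n" "i \<noteq> j"
  shows "expect n m p (\<lambda>X. f (X i) (X j)) = (\<Sum>x\<in>cube m. \<Sum>y\<in>cube m. mu m p x * mu m p y * f x y)"
proof -
  have "expect n m p (\<lambda>X. f (X i) (X j)) = expect n m p (\<lambda>X. \<Sum>x\<in>cube m. mu m p x * f x (X j))"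
    using assms by (subst E_avg[OF assms(1)]) simp
  also have "\<dots> = (\<Sum>y\<in>cube m. mu m p y * (\<Sum>x\<in>cube m. mu m p x * f x y))"
    by (rule E1[OF assms(2)])
  also have "\<dots> = (\<Sum>y\<in>cube m. \<Sum>x\<in>cube m. mu m p x * mu m p y * f x y)"
    by (simp add: sum_distrib_left mult_ac)
  also have "\<dots> = (\<Sum>x\<in>cube m. \<Sum>y\<in>cube m. mu m p x * mu m p y * f x y)"
    by (rule sum.swap)
  finally show ?thesis .
qed



definition OS :: "nat \<Rightarrow> (nat \<Rightarrow> nat \<Rightarrow> real) \<Rightarrow> real" where
  "OS n F = (\<Sum>i<n. \<Sum>j\<in>{..<n} - {i}. F i j)"

lemma g_bool: "g x y = of_bool (x \<inter> y \<noteq> {})" by (simp add: g_def)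

lemma num_edges_OS: "2 * num_edges n X = OS n (\<lambda>i j. g (X i) (X j))"
proof -
  let ?Pr = "{(i,j). i < j \<and> j < n}"
  let ?Sig = "Sigma {..<n} (\<lambda>i. {..<n} - {i})"
  let ?f = "\<lambda>z. g (X (fst z)) (X (snd z))"
  have finPr: "finite ?Pr" by (rule finite_subset[of _ "{..<n} \<times> {..<n}"]) auto
  have "OS n (\<lambda>i j. g (X i) (X j)) = (\<Sum>z\<in>?Sig. ?f z)"
    unfolding OS_def by (subst sum.Sigma) (auto simp: split_def)
  also have "?Sig = ?Pr \<union> prod.swap ` ?Pr" by (auto simp: image_def)
  also have "(\<Sum>z\<in>?Pr \<union> prod.swap ` ?Pr. ?f z) = (\<Sum>z\<in>?Pr. ?f z) + (\<Sum>z\<in>prod.swap ` ?Pr. ?f z)"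
    by (rule sum.union_disjoint) (use finPr in auto)
  also have "(\<Sum>z\<in>prod.swap ` ?Pr. ?f z) = (\<Sum>z\<in>?Pr. ?f z)"
    by (subst sum.reindex) (auto simp: g_sym)
  also have "(\<Sum>z\<in>?Pr. ?f z) = num_edges n X"
  proof -
    have "(\<Sum>z\<in>?Pr. ?f z) = (\<Sum>z\<in>?Pr. of_bool (X (fst z) \<inter> X (snd z) \<noteq> {}))"
      by (simp add: g_bool)
    also have "\<dots> = real (card (?Pr \<inter> {z. X (fst z) \<inter> X (snd z) \<noteq> {}}))"
      using finPr by simp
    also have "?Pr \<inter> {z. X (fst z) \<inter> X (snd z) \<noteq> {}} = {(i, j). i < j \<and> j < n \<and> X i \<inter> X j \<noteq> {}}"
      by auto
    finally show ?thesis by (simp add: num_edges_def)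
  qed
  finally show ?thesis by simp
qed

lemma OS_add: "OS n (\<lambda>i j. F i j + G i j) = OS n F + OS n G"
  by (simp add: OS_def sum.distrib)

lemma card_minus1: "i < n \<Longrightarrow> card ({..<n} - {i}) = n - 1"
  by simp

lemma OS_fst: "OS n (\<lambda>i j. a i) = real (n - 1) * (\<Sum>i<n. a i)"
  by (simp add: OS_def sum_distrib_left)

lemma OS_snd: "OS n (\<lambda>i j. a j) = real (n - 1) * (\<Sum>i<n. a i)"
proof -
  have "OS n (\<lambda>i j. a j) = (\<Sum>i<n. (\<Sum>j<n. a j) - a i)"
    unfolding OS_def by (rule sum.cong) (auto simp: sum_diff1)
  also have "\<dots> = real n * (\<Sum>j<n. a j) - (\<Sum>i<n. a i)"
    by (simp add: sum_subtractf)
  also have "\<dots> = real (n - 1) * (\<Sum>i<n. a i)"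
    by (cases n) (auto simp: algebra_simps)
  finally show ?thesis .
qed

lemma OS_const: "OS n (\<lambda>i j. c) = real n * real (n - 1) * c"
  by (cases n) (simp_all add: OS_def)

definition TT where "TT n m p X = OS n (\<lambda>i j. h2 m p (X i) (X j))"
definition SS where "SS n m p X = (\<Sum>i<n. h1 m p (X i))"

lemma edges_decomp:
  "2 * num_edges n X = TT n m p X + 2 * real (n - 1) * SS n m p X + real n * real (n - 1) * phat m p"
proof -
  have "g (X i) (X j) = h2 m p (X i) (X j) + (h1 m p (X i) + (h1 m p (X j) + phat m p))" for i j
    by (simp add: h2_def h1_def)
  then have "OS n (\<lambda>i j. g (X i) (X j)) = OS n (\<lambda>i j. h2 m p (X i) (X j) + (h1 m p (X i) + (h1 m p (X j) + phat m p)))"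
    by simp
  also have "\<dots> = TT n m p X + real (n - 1) * SS n m p X + (real (n - 1) * SS n m p X + real n * real (n - 1) * phat m p)"
    by (simp only: OS_add OS_fst OS_snd TT_def SS_def) (simp add: algebra_simps)
  finally show ?thesis using num_edges_OS[of n X] by simp
qed



lemma sum_single:
  assumes "finite A" "a \<in> A" "\<And>x. x \<in> A \<Longrightarrow> x \<noteq> a \<Longrightarrow> f x = 0"
  shows "sum f A = f a"
proof -
  have "sum f A = sum f {a}"
    by (rule sum.mono_neutral_right) (use assms in auto)
  then show ?thesis by simp
qed

lemma sum_two:
  assumes "finite A" "a \<in> A" "b \<in> A" "a \<noteq> b" "\<And>x. x \<in> A \<Longrightarrow> x \<noteq> a \<Longrightarrow> x \<noteq> b \<Longrightarrow> f x = 0"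
  shows "sum f A = f a + f b"
proof -
  have "sum f A = sum f {a, b}"
    by (rule sum.mono_neutral_right) (use assms in auto)
  then show ?thesis using assms(4) by simp
qed

lemma szero1: "s m p f = 0 \<Longrightarrow> (\<Sum>y\<in>cube m. mu m p y * (f y * c)) = 0"
  unfolding s_def by (simp add: mult.assoc[symmetric] sum_distrib_right[symmetric])
lemma szero2: "s m p f = 0 \<Longrightarrow> (\<Sum>y\<in>cube m. mu m p y * (c * f y)) = 0"
  using szero1[of m p f c] by (simp add: mult.commute)

lemma s_h2_eta: "s m p (h2 m p x) = 0" using s_h2[of m p x] by simp

lemma ss_h2: "ss m p (h2 m p) = 0"
  by (simp add: ss_iter s_h2_eta s_const)

lemma E_TT: "expect n m p (TT n m p) = 0"
proof -
  have "TT n m p = (\<lambda>X. \<Sum>i<n. \<Sum>j\<in>{..<n} - {i}. h2 m p (X i) (X j))"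
    by (rule ext) (simp add: TT_def OS_def)
  then have "expect n m p (TT n m p) = (\<Sum>i<n. \<Sum>j\<in>{..<n} - {i}. expect n m p (\<lambda>X. h2 m p (X i) (X j)))"
    by (simp only: E_sum)
  also have "\<dots> = 0"
    by (intro sum.neutral ballI) (simp add: E2 ss_def[symmetric] ss_h2)
  finally show ?thesis .
qed

lemma E_SS: "expect n m p (SS n m p) = 0"
proof -
  have "SS n m p = (\<lambda>X. \<Sum>i<n. h1 m p (X i))"
    by (rule ext) (simp add: SS_def)
  then have "expect n m p (SS n m p) = (\<Sum>i<n. expect n m p (\<lambda>X. h1 m p (X i)))"
    by (simp only: E_sum)
  also have "\<dots> = 0"
    by (intro sum.neutral ballI) (simp add: E1 s_def[symmetric] s_h1)
  finally show ?thesis .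
qed

lemma num_edges_eq: "num_edges n X = TT n m p X / 2 + real (n - 1) * SS n m p X + real n * real (n - 1) * phat m p / 2"
  using edges_decomp[of n X m p] by simp

lemma E_N: "expect n m p (num_edges n) = real n * real (n - 1) * phat m p / 2"
proof -
  have "num_edges n = (\<lambda>X. (1/2) * TT n m p X + (real (n - 1) * SS n m p X + real n * real (n - 1) * phat m p / 2))"
    by (rule ext) (simp add: num_edges_eq[of n _ m p])
  then show ?thesis by (simp only: E_add E_cmult E_const E_TT E_SS) simp?
qed

lemma E_SS2: "expect n m p (\<lambda>X. SS n m p X * SS n m p X) = real n * V1 m p"
proof -
  have "(\<lambda>X. SS n m p X * SS n m p X) = (\<lambda>X. \<Sum>i<n. \<Sum>k<n. h1 m p (X i) * h1 m p (X k))"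
    by (rule ext) (simp add: SS_def sum_product)
  then have "expect n m p (\<lambda>X. SS n m p X * SS n m p X) = (\<Sum>i<n. \<Sum>k<n. expect n m p (\<lambda>X. h1 m p (X i) * h1 m p (X k)))"
    by (simp only: E_sum)
  also have "\<dots> = (\<Sum>i<n. V1 m p)"
  proof (rule sum.cong)
    fix i assume i: "i \<in> {..<n}"
    have "(\<Sum>k<n. expect n m p (\<lambda>X. h1 m p (X i) * h1 m p (X k))) = expect n m p (\<lambda>X. h1 m p (X i) * h1 m p (X i))"
    proof (rule sum_single)
      fix k assume k: "k \<in> {..<n}" "k \<noteq> i"
      show "expect n m p (\<lambda>X. h1 m p (X i) * h1 m p (X k)) = 0"
        by (rule E_zero[of k]) (use k in \<open>auto intro!: szero2 s_h1\<close>)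
    qed (use i in auto)
    also have "\<dots> = V1 m p"
      using E1[of i n m p "\<lambda>x. h1 m p x * h1 m p x"] i by (simp add: V1_def s_def power2_eq_square)
    finally show "(\<Sum>k<n. expect n m p (\<lambda>X. h1 m p (X i) * h1 m p (X k))) = V1 m p" .
  qed simp
  finally show ?thesis by simp
qed


lemma h2_cases:
  assumes "(i::nat) \<noteq> j" "k \<noteq> l" "\<not> (k = i \<and> l = j)" "\<not> (k = j \<and> l = i)"
  shows "(j \<noteq> k \<and> j \<noteq> l) \<or> (i \<noteq> k \<and> i \<noteq> l)"
  using assms by blast

lemma c_zero:
  assumes "i < n" "j < n" "k < n" "l < n" "i \<noteq> j" "k \<noteq> l" "\<not> (k = i \<and> l = j)" "\<not> (k = j \<and> l = i)"
  shows "expect n m p (\<lambda>X. h2 m p (X i) (X j) * h2 m p (X k) (X l)) = 0"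
proof (cases "j \<noteq> k \<and> j \<noteq> l")
  case True
  show ?thesis
  proof (rule E_zero[of j])
    fix X :: "nat \<Rightarrow> nat set"
    have "(\<Sum>y\<in>cube m. mu m p y * (h2 m p ((X(j := y)) i) ((X(j := y)) j) * h2 m p ((X(j := y)) k) ((X(j := y)) l)))
       = (\<Sum>y\<in>cube m. mu m p y * (h2 m p (X i) y * h2 m p (X k) (X l)))"
      using assms True by simp
    also have "\<dots> = 0" by (rule szero1, rule s_h2_eta)
    finally show "(\<Sum>y\<in>cube m. mu m p y * (h2 m p ((X(j := y)) i) ((X(j := y)) j) * h2 m p ((X(j := y)) k) ((X(j := y)) l))) = 0" .
  qed (use assms in simp)
next
  case False
  then have F: "i \<noteq> k \<and> i \<noteq> l" using h2_cases[OF assms(5-8)] by blast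
  show ?thesis
  proof (rule E_zero[of i])
    fix X :: "nat \<Rightarrow> nat set"
    have "(\<Sum>y\<in>cube m. mu m p y * (h2 m p ((X(i := y)) i) ((X(i := y)) j) * h2 m p ((X(i := y)) k) ((X(i := y)) l)))
       = (\<Sum>y\<in>cube m. mu m p y * (h2 m p y (X j) * h2 m p (X k) (X l)))"
      using assms F by simp
    also have "\<dots> = 0" by (rule szero1, rule s_h2')
    finally show "(\<Sum>y\<in>cube m. mu m p y * (h2 m p ((X(i := y)) i) ((X(i := y)) j) * h2 m p ((X(i := y)) k) ((X(i := y)) l))) = 0" .
  qed (use assms in simp)
qed

lemma E_TS: "expect n m p (\<lambda>X. TT n m p X * SS n m p X) = 0"
proof -
  have "(\<lambda>X. TT n m p X * SS n m p X) = (\<lambda>X. \<Sum>i<n. \<Sum>j\<in>{..<n} - {i}. \<Sum>k<n. h2 m p (X i) (X j) * h1 m p (X k))"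
    by (rule ext) (simp only: TT_def SS_def OS_def sum_distrib_right, simp only: sum_distrib_left)
  then have "expect n m p (\<lambda>X. TT n m p X * SS n m p X) =
     (\<Sum>i<n. \<Sum>j\<in>{..<n} - {i}. \<Sum>k<n. expect n m p (\<lambda>X. h2 m p (X i) (X j) * h1 m p (X k)))"
    by (simp only: E_sum)
  also have "\<dots> = 0"
  proof (intro sum.neutral ballI)
    fix i j k assume i: "i \<in> {..<n}" and j: "j \<in> {..<n} - {i}" and k: "k \<in> {..<n}"
    show "expect n m p (\<lambda>X. h2 m p (X i) (X j) * h1 m p (X k)) = 0"
    proof (cases "k = j")
      case False
      show ?thesis
        by (rule E_zero[of j]) (use i j k False in \<open>auto intro!: szero1 s_h2_eta\<close>)
    next
      case True
      show ?thesis
        by (rule E_zero[of i]) (use i j k True in \<open>auto intro!: szero1 s_h2'\<close>)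
    qed
  qed
  finally show ?thesis .
qed

lemma E_TT2: "expect n m p (\<lambda>X. TT n m p X * TT n m p X) = 2 * real n * real (n - 1) * V2 m p"
proof -
  let ?c = "\<lambda>i j k l. expect n m p (\<lambda>X. h2 m p (X i) (X j) * h2 m p (X k) (X l))"
  have "(\<lambda>X. TT n m p X * TT n m p X) = (\<lambda>X. \<Sum>i<n. \<Sum>j\<in>{..<n} - {i}. \<Sum>k<n. \<Sum>l\<in>{..<n} - {k}.
      h2 m p (X i) (X j) * h2 m p (X k) (X l))"
    by (rule ext) (simp only: TT_def OS_def sum_distrib_right, simp only: sum_distrib_left)
  then have "expect n m p (\<lambda>X. TT n m p X * TT n m p X) =
     (\<Sum>i<n. \<Sum>j\<in>{..<n} - {i}. \<Sum>k<n. \<Sum>l\<in>{..<n} - {k}. ?c i j k l)"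
    by (simp only: E_sum)
  also have "\<dots> = (\<Sum>i<n. \<Sum>j\<in>{..<n} - {i}. 2 * V2 m p)"
  proof (intro sum.cong refl)
    fix i j assume i: "i \<in> {..<n}" and j: "j \<in> {..<n} - {i}"
    have ij: "i < n" "j < n" "i \<noteq> j" using i j by auto
    have cij: "?c i j i j = V2 m p"
      using E2[OF ij, of m p "\<lambda>x y. h2 m p x y * h2 m p x y"] by (simp add: V2_def ss_def power2_eq_square)
    have cji: "?c i j j i = V2 m p"
      using E2[OF ij, of m p "\<lambda>x y. h2 m p x y * h2 m p y x"] by (simp add: V2_def ss_def power2_eq_square h2_sym[of m p _ "_::nat set"])
    have r_other: "(\<Sum>l\<in>{..<n} - {k}. ?c i j k l) = 0" if "k < n" "k \<noteq> i" "k \<noteq> j" for k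
      by (rule sum.neutral) (use that ij in \<open>auto intro!: c_zero\<close>)
    have r_i: "(\<Sum>l\<in>{..<n} - {i}. ?c i j i l) = ?c i j i j"
      by (rule sum_single) (use ij in \<open>auto intro!: c_zero\<close>)
    have r_j: "(\<Sum>l\<in>{..<n} - {j}. ?c i j j l) = ?c i j j i"
      by (rule sum_single) (use ij in \<open>auto intro!: c_zero\<close>)
    have "(\<Sum>k<n. \<Sum>l\<in>{..<n} - {k}. ?c i j k l) = (\<Sum>l\<in>{..<n} - {i}. ?c i j i l) + (\<Sum>l\<in>{..<n} - {j}. ?c i j j l)"
      by (rule sum_two) (use ij r_other in auto)
    then show "(\<Sum>k<n. \<Sum>l\<in>{..<n} - {k}. ?c i j k l) = 2 * V2 m p"
      using r_i r_j cij cji by simp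
  qed
  also have "\<dots> = 2 * real n * real (n - 1) * V2 m p"
    by (cases n) simp_all
  finally show ?thesis .
qed



lemma final_arith:
  fixes N D V W1 W2 L0 L1 :: real
  assumes N: "N \<ge> 3" and Dp: "D > 0" and v1: "W1 \<ge> 0" and v2: "W2 \<ge> 0"
    and v2e: "W2 = D - 2 * W1" and Ve: "V = N * (N - 1) * W2 / 2 + N * (N - 1)^2 * W1"
    and l0: "L0 \<le> D" and l1: "L1 \<le> W1 + D^2"
  shows "N^2 * L0 \<le> 9 * V^2 * (1 / (N^2 * D)) \<and> N^3 * L1 \<le> 9 * V^2 * (1 / (N^2 * D) + 1 / N)"
proof -
  define a where "a = N * (N - 1) * D / 2"
  define b where "b = N * (N - 1)^2 * W1"
  have Npos: "N > 0" using N by simp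
  have a0: "a \<ge> 0" using N Dp by (simp add: a_def)
  have b0: "b \<ge> 0" using N v1 by (simp add: b_def)
  have "V - a = N * (N - 1) * (N - 2) * W1"
    unfolding Ve a_def v2e by (simp add: power2_eq_square field_simps)
  moreover have "N * (N - 1) * (N - 2) * W1 \<ge> 0" using N v1 by simp
  ultimately have Va: "V \<ge> a" by linarith
  have Vb: "V \<ge> b" unfolding Ve b_def using N v2 by simp
  have VV: "V^2 \<ge> a^2" using Va a0 by (simp add: power_mono)
  have VVb: "V^2 \<ge> a * b" using Va Vb a0 b0 by (simp add: power2_eq_square mult_mono)
  have ND: "N^2 * D > 0" using Npos Dp by simp
  have p1: "N^2 * D \<le> 9 * a^2 / (N^2 * D)"
  proof -
    have "9 * a^2 / (N^2 * D) = 9 * (N - 1)^2 * D / 4"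
      unfolding a_def using Npos Dp by (simp add: power2_eq_square field_simps)
    moreover have "N^2 \<le> 9 * (N - 1)^2 / 4"
    proof -
      have "2 * N \<le> 3 * (N - 1)" using N by simp
      then have "(2 * N)^2 \<le> (3 * (N - 1))^2" using Npos by (intro power_mono) auto
      then show ?thesis by (simp add: power2_eq_square algebra_simps)
    qed
    moreover have "N^2 * D \<le> (9 * (N - 1)^2 / 4) * D"
      using \<open>N^2 \<le> 9 * (N - 1)^2 / 4\<close> Dp by (intro mult_right_mono) auto
    ultimately show ?thesis by simp
  qed
  have "9 * a^2 / (N^2 * D) \<le> 9 * V^2 / (N^2 * D)"
    using VV ND by (intro divide_right_mono) auto
  then have P1: "N^2 * D \<le> 9 * V^2 * (1 / (N^2 * D))" using p1 by simp
  have "N^2 * L0 \<le> N^2 * D" using l0 by (simp add: mult_left_mono)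
  with P1 have part1: "N^2 * L0 \<le> 9 * V^2 * (1 / (N^2 * D))" by linarith
  have q1: "N^3 * D^2 \<le> 9 * V^2 / N"
  proof -
    have e: "9 * a^2 / N = 9 * N * (N - 1)^2 * D^2 / 4"
      unfolding a_def using Npos by (simp add: power2_eq_square field_simps)
    have "N^2 \<le> 9 * (N - 1)^2 / 4"
    proof -
      have "2 * N \<le> 3 * (N - 1)" using N by simp
      then have "(2 * N)^2 \<le> (3 * (N - 1))^2" using Npos by (intro power_mono) auto
      then show ?thesis by (simp add: power2_eq_square algebra_simps)
    qed
    then have "N * D^2 * N^2 \<le> N * D^2 * (9 * (N - 1)^2 / 4)" using Npos by (intro mult_left_mono) auto
    then have "N^3 * D^2 \<le> 9 * a^2 / N" unfolding e by (simp add: power2_eq_square power3_eq_cube algebra_simps)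
    also have "9 * a^2 / N \<le> 9 * V^2 / N" using VV Npos by (intro divide_right_mono) auto
    finally show ?thesis .
  qed
  have q2: "N^3 * W1 \<le> 9 * V^2 / (N^2 * D)"
  proof -
    have e: "9 * (a * b) / (N^2 * D) = 9 * (N - 1)^3 * W1 / 2"
      unfolding a_def b_def using Npos Dp by (simp add: power2_eq_square power3_eq_cube field_simps)
    have "(2 * N) ^ 3 \<le> (3 * (N - 1))^3" using N by (intro power_mono) auto
    moreover have "(2 * N) ^ 3 = 8 * N^3" "(3 * (N - 1))^3 = 27 * (N - 1)^3"
      by (simp_all only: power_mult_distrib) simp_all
    ultimately have "8 * N^3 \<le> 27 * (N - 1)^3" by simp
    moreover have "(N - 1)^3 \<ge> 0" using N by simp
    ultimately have "N^3 \<le> 9 * (N - 1)^3 / 2" by linarith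
    then have "W1 * N^3 \<le> W1 * (9 * (N - 1)^3 / 2)" using v1 by (intro mult_left_mono) auto
    then have "N^3 * W1 \<le> 9 * (a * b) / (N^2 * D)" unfolding e by (simp add: algebra_simps)
    also have "\<dots> \<le> 9 * V^2 / (N^2 * D)" using VVb ND by (intro divide_right_mono) auto
    finally show ?thesis .
  qed
  have "N^3 * L1 \<le> N^3 * (W1 + D^2)" using l1 Npos by (intro mult_left_mono) auto
  also have "\<dots> = N^3 * W1 + N^3 * D^2" by (simp add: algebra_simps)
  also have "\<dots> \<le> 9 * V^2 / (N^2 * D) + 9 * V^2 / N" using q1 q2 by simp
  also have "\<dots> = 9 * V^2 * (1 / (N^2 * D) + 1 / N)" by (simp add: algebra_simps)
  finally show ?thesis using part1 by simp
qed



lemma sq_lemma: "((a::real) / 2 + c * b)^2 = (1/4) * (a * a) + (c * (a * b) + c^2 * (b * b))"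
  by (simp add: power2_eq_square field_simps)

lemma fin_lemma: "(1/4) * (2 * (x::real) * y * v2) + (y * 0 + y^2 * (x * v1)) = x * y * v2 / 2 + x * y^2 * v1"
  by (simp add: field_simps)

lemma var_eq: "var_edges n m p = real n * real (n - 1) * V2 m p / 2 + real n * (real (n - 1))^2 * V1 m p"
proof -
  have pt: "(num_edges n X - expect n m p (num_edges n))^2 =
     (1/4) * (TT n m p X * TT n m p X) + (real (n - 1) * (TT n m p X * SS n m p X) + (real (n - 1))^2 * (SS n m p X * SS n m p X))" for X
  proof -
    have d: "num_edges n X - expect n m p (num_edges n) = TT n m p X / 2 + real (n - 1) * SS n m p X"
      using num_edges_eq[of n X m p] E_N[of n m p] by linarith
    show ?thesis unfolding d by (rule sq_lemma)
  qed
  have "var_edges n m p = expect n m p (\<lambda>X. (1/4) * (TT n m p X * TT n m p X) + (real (n - 1) * (TT n m p X * SS n m p X) + (real (n - 1))^2 * (SS n m p X * SS n m p X)))"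
    unfolding var_edges_def pt ..
  also have "\<dots> = (1/4) * (2 * real n * real (n - 1) * V2 m p) + (real (n - 1) * 0 + (real (n - 1))^2 * (real n * V1 m p))"
    by (simp only: E_add E_cmult E_TT2 E_TS E_SS2)
  also have "\<dots> = real n * real (n - 1) * V2 m p / 2 + real n * (real (n - 1))^2 * V1 m p"
    by (rule fin_lemma)
  finally show ?thesis .
qed

theorem lemma7p1:
  "\<exists>C::real. C > 0 \<and>
     (\<forall>(n::nat) (m::nat) (p::real). n \<ge> 3 \<longrightarrow> m \<ge> 3 \<longrightarrow> 0 < p \<longrightarrow> p < 1 \<longrightarrow>
        real n ^ 2 * L2sq2 m p (contr0 (gbar2 m p) (gbar2 m p))
          \<le> C * (var_edges n m p)^2 * (1 / (real n ^ 2 * phat m p * (1 - phat m p)))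
      \<and> real n ^ 3 * L2sq1 m p (contr1 m p (gbar2 m p) (gbar2 m p))
          \<le> C * (var_edges n m p)^2 *
              (1 / (real n ^ 2 * phat m p * (1 - phat m p)) + 1 / real n))"
proof (intro exI[of _ 9] conjI allI impI)
  fix n m :: nat and p :: real
  assume n: "n \<ge> 3" and m: "m \<ge> 3" and p0: "0 < p" and p1: "p < 1"
  have P: "0 < phat m p" "phat m p < 1" using phat_bounds[of p m] p0 p1 m by auto
  have Dp: "Dv m p > 0" using P by simp
  have rn: "real (n - 1) = real n - 1" using n by (simp add: of_nat_diff)
  have l1: "L2sq1 m p (contr1 m p (gbar2 m p) (gbar2 m p)) \<le> V1 m p + (Dv m p)^2"
  proof -
    have "\<bar>1 - 2 * phat m p\<bar> \<le> 1" using P by auto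
    then have "(1 - 2 * phat m p)^2 \<le> 1" using abs_le_square_iff[of "1 - 2 * phat m p" 1] by simp
    then have "(1 - 2 * phat m p)^2 * V1 m p \<le> 1 * V1 m p"
      using V1_nonneg[OF p0 p1, of m] by (intro mult_right_mono) auto
    then show ?thesis by (simp add: L2_1)
  qed
  have main: "real n ^ 2 * L2sq2 m p (contr0 (gbar2 m p) (gbar2 m p)) \<le> 9 * (var_edges n m p)^2 * (1 / (real n ^ 2 * Dv m p))
     \<and> real n ^ 3 * L2sq1 m p (contr1 m p (gbar2 m p) (gbar2 m p)) \<le> 9 * (var_edges n m p)^2 * (1 / (real n ^ 2 * Dv m p) + 1 / real n)"
  proof (rule final_arith[OF _ Dp V1_nonneg[OF p0 p1] V2_nonneg[OF p0 p1] V2_eq _ L2_0[OF p0 p1] l1])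
    show "real n \<ge> 3" using n by simp
    show "m \<ge> 1" using m by simp
    show "var_edges n m p = real n * (real n - 1) * V2 m p / 2 + real n * (real n - 1)^2 * V1 m p"
      using var_eq[of n m p] unfolding rn .
  qed
  then show "real n ^ 2 * L2sq2 m p (contr0 (gbar2 m p) (gbar2 m p))
          \<le> 9 * (var_edges n m p)^2 * (1 / (real n ^ 2 * phat m p * (1 - phat m p)))"
    and "real n ^ 3 * L2sq1 m p (contr1 m p (gbar2 m p) (gbar2 m p))
          \<le> 9 * (var_edges n m p)^2 * (1 / (real n ^ 2 * phat m p * (1 - phat m p)) + 1 / real n)"
    by (simp_all add: mult.assoc)
qed simp


end
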